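(* Let $A$ be a unital commutative complex Banach algebra without nontrivial idempotents, equipped with a $G$-graded structure $A=\bigoplus_{g\in G}A_g$ for a finite Abelian group $G$ with neutral element $e$. Suppose some element $a\in A_g$ with $g\neq e$ is invertible. Then the group $G(A)/G(A)_0$ is infinite, where $G(A)$ is the group of invertible elements of $A$ and $G(A)_0$ is the connected component of the identity in $G(A)$.
   Context: A $G$-graded structure on $A$ is a direct sum decomposition $A=\bigoplus_{g\in G}A_g$ into closed linear subspaces with $A_gA_h\subseteq A_{gh}$ for all $g,h\in G$. A nontrivial idempotent is an element $p$ with $p^2=p$, $p\neq 0,1$. *)

theory Defs
  imports "HOL-Analysis.Analysis"
begin

text \<open>Complex scalar
  multiplication is then z x = j z * x.\<close>
definition complex_structure :: "(complex \<Rightarrow> 'a::{real_normed_algebra_1,comm_ring_1}) \<Rightarrow> bool" where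
  "complex_structure j \<longleftrightarrow>
     (\<forall>z w. j (z + w) = j z + j w) \<and>
     (\<forall>z w. j (z * w) = j z * j w) \<and>
     (\<forall>r::real. j (complex_of_real r) = of_real r) \<and>
     (\<forall>z x. norm (j z * x) = cmod z * norm x)"

definition graded_structure ::
  "(complex \<Rightarrow> 'a::{real_normed_algebra_1,comm_ring_1}) \<Rightarrow> ('g::{finite,ab_group_add} \<Rightarrow> 'a set) \<Rightarrow> bool" where
  "graded_structure j Ag \<longleftrightarrow>
     (\<forall>g. closed (Ag g) \<and> 0 \<in> Ag g \<and> (\<forall>x\<in>Ag g. \<forall>y\<in>Ag g. x + y \<in> Ag g)
          \<and> (\<forall>z. \<forall>x\<in>Ag g. j z * x \<in> Ag g)) \<and>
     (\<forall>g h. \<forall>x\<in>Ag g. \<forall>y\<in>Ag h. x * y \<in> Ag (g + h)) \<and>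
     (\<forall>x. \<exists>!f. (\<forall>g. f g \<in> Ag g) \<and> x = (\<Sum>g\<in>UNIV. f g))"

definition invertibles :: "'a::comm_ring_1 set" where
  "invertibles = {x. \<exists>y. x * y = 1}"

definition principal_component :: "'a::{real_normed_algebra_1,comm_ring_1} set" where
  "principal_component = connected_component_set invertibles 1"

definition invertibles_quotient :: "'a::{real_normed_algebra_1,comm_ring_1} set set" where
  "invertibles_quotient = (\<lambda>x. (\<lambda>y. x * y) ` principal_component) ` invertibles"

end

theory Submission
  imports Defs
begin


lemma exp_rem_bound:
  fixes x :: "'a::{real_normed_algebra_1,banach}"
  assumes "norm x \<le> 1"
  shows "norm (exp x - 1 - x) \<le> norm x ^ 2"
proof -
  let ?R = "\<lambda>n. inverse (fact (n + 2)) *\<^sub>R (x ^ (n + 2))"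
  let ?r = "\<lambda>n. inverse (fact (n + 2)) * (norm x ^ (n + 2))"
  have sr: "summable ?r"
    by (rule summable_exp [THEN summable_ignore_initial_segment])
  have nR: "norm (?R n) \<le> ?r n" for n
    using norm_power_ineq[of x "n+2"] by (simp del: power_Suc add: mult_left_mono)
  have sR: "summable (\<lambda>n. norm (?R n))"
    apply (rule summable_comparison_test[OF _ sr]) apply (rule exI[of _ 0])
    using nR by (simp only: real_norm_def abs_norm_cancel) blast
  have "norm (exp x - 1 - x) = norm (\<Sum>n. ?R n)"
    by (subst exp_first_two_terms) simp
  also have "\<dots> \<le> (\<Sum>n. norm (?R n))" by (rule summable_norm[OF sR])
  also have "\<dots> \<le> (\<Sum>n. ?r n)" by (rule suminf_le[OF nR sR sr])
  also have "\<dots> = exp (norm x) - 1 - norm x"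
    using exp_first_two_terms[of "norm x"] by simp
  also have "\<dots> \<le> norm x ^ 2" using exp_bound[of "norm x"] assms by simp
  finally show ?thesis .
qed



lemma exp_phi_lip:
  fixes x w :: "'a::{real_normed_algebra_1,comm_ring_1,banach}"
  assumes "norm x \<le> r" "norm w \<le> r" "r \<le> 1/2"
  shows "norm ((exp x - 1 - x) - (exp w - 1 - w)) \<le> 6 * r * norm (x - w)"
proof -
  define d where "d = x - w"
  have xd: "x = w + d" by (simp add: d_def)
  have ex: "exp x = exp w * exp d" unfolding xd using exp_add_commuting[of d w, OF mult.commute] by (simp add: add.commute mult.commute)
  have eq: "(exp x - 1 - x) - (exp w - 1 - w) = exp w * (exp d - 1 - d) + (exp w - 1) * d"
    unfolding ex by (simp add: d_def algebra_simps)
  have nd: "norm d \<le> 2 * r" using assms norm_triangle_ineq4[of x w] by (simp add: d_def)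
  have r0: "0 \<le> r" using assms(1) norm_ge_zero order_trans by blast
  have "norm (exp w) \<le> exp (norm w)" by (rule norm_exp)
  also have "\<dots> \<le> exp (1/2)" using assms by simp
  also have "\<dots> \<le> 2" by (rule exp_half_le2)
  finally have ew: "norm (exp w) \<le> 2" .
  have "norm (exp d - 1 - d) \<le> norm d ^ 2" using nd assms by (intro exp_rem_bound) simp
  also have "\<dots> \<le> 2 * r * norm d" using nd by (simp add: power2_eq_square mult_right_mono)
  finally have e1: "norm (exp d - 1 - d) \<le> 2 * r * norm d" .
  have "norm (exp w - 1) \<le> norm (exp w - 1 - w) + norm w"
    using norm_triangle_ineq[of "exp w - 1 - w" w] by simp
  also have "\<dots> \<le> norm w ^ 2 + norm w" using exp_rem_bound[of w] assms by simp
  also have "\<dots> \<le> 2 * r"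
  proof -
    have "norm w ^ 2 \<le> r * r" using assms by (simp add: power2_eq_square mult_mono')
    also have "\<dots> \<le> r" using assms r0 by (simp add: mult_left_le)
    finally show ?thesis using assms by simp
  qed
  finally have e2: "norm (exp w - 1) \<le> 2 * r" .
  have "norm (exp w * (exp d - 1 - d) + (exp w - 1) * d)
      \<le> norm (exp w) * norm (exp d - 1 - d) + norm (exp w - 1) * norm d"
    by (rule order_trans[OF norm_triangle_ineq add_mono[OF norm_mult_ineq norm_mult_ineq]])
  also have "\<dots> \<le> 2 * (2 * r * norm d) + 2 * r * norm d"
    using r0 by (intro add_mono mult_mono e1 e2 ew) auto
  also have "\<dots> = 6 * r * norm d" by simp
  finally show ?thesis unfolding eq d_def .
qed

lemma exp_local_surj:
  fixes y :: "'a::{real_normed_algebra_1,comm_ring_1,banach}"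
  assumes "norm (y - 1) \<le> 1/48"
  shows "\<exists>b. exp b = y"
proof -
  define r :: real where "r = 1/24"
  define T where "T b = b - (exp b - y)" for b :: 'a
  have lip: "dist (T x) (T w) \<le> 1/4 * dist x w" if "x \<in> cball 0 r" "w \<in> cball 0 r" for x w
  proof -
    have "T x - T w = - ((exp x - 1 - x) - (exp w - 1 - w))" by (simp add: T_def algebra_simps)
    hence "norm (T x - T w) = norm ((exp x - 1 - x) - (exp w - 1 - w))" by (metis norm_minus_cancel)
    also have "\<dots> \<le> 6 * r * norm (x - w)" using that by (intro exp_phi_lip) (auto simp: r_def)
    finally show ?thesis by (simp add: dist_norm r_def)
  qed
  have T0: "T 0 = y - 1" by (simp add: T_def)
  have into: "T ` cball 0 r \<subseteq> cball 0 r"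
  proof
    fix z assume "z \<in> T ` cball 0 r"
    then obtain x where x: "x \<in> cball 0 r" "z = T x" by auto
    have "dist (T x) (T 0) \<le> 1/4 * dist x 0" using lip[OF x(1), of 0] by (simp add: r_def)
    hence "norm (T x - (y - 1)) \<le> 1/4 * norm x" by (simp add: T0 dist_norm)
    moreover have "norm x \<le> r" using x by simp
    ultimately have "norm (T x) \<le> 1/4 * r + 1/48"
      using norm_triangle_ineq[of "T x - (y - 1)" "y - 1"] assms by simp
    thus "z \<in> cball 0 r" using x by (simp add: r_def)
  qed
  obtain b where "b \<in> cball 0 r" "T b = b"
    using Banach_fix[of "cball 0 r" "1/4" T] into lip
    by (auto simp: complete_eq_closed r_def)
  thus ?thesis by (auto simp: T_def)
qed



lemma open_range_exp:
  "open (range (exp :: 'a::{real_normed_algebra_1,comm_ring_1,banach} \<Rightarrow> 'a))"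
  unfolding open_dist
proof safe
  fix b :: 'a
  define \<delta> where "\<delta> = 1 / (48 * (norm (exp (-b)) + 1))"
  have d0: "\<delta> > 0" by (simp add: \<delta>_def add_pos_nonneg)
  show "\<exists>e>0. \<forall>y. dist y (exp b) < e \<longrightarrow> y \<in> range exp"
  proof (intro exI[of _ \<delta>] conjI allI impI d0)
    fix y :: 'a assume "dist y (exp b) < \<delta>"
    hence ny: "norm (y - exp b) < \<delta>" by (simp add: dist_norm)
    have inv: "exp b * exp (-b) = 1" by (rule exp_minus_inverse)
    have "y * exp (-b) - 1 = (y - exp b) * exp (-b)" using inv by (simp add: algebra_simps)
    hence "norm (y * exp (-b) - 1) \<le> norm (y - exp b) * norm (exp (-b))"
      by (simp add: norm_mult_ineq)
    also have "\<dots> \<le> \<delta> * (norm (exp (-b)) + 1)"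
      using ny d0 by (intro mult_mono) auto
    also have "\<dots> = 1/48" unfolding \<delta>_def by (simp add: add_pos_nonneg add_nonneg_eq_0_iff)
    finally obtain c where c: "exp c = y * exp (-b)" using exp_local_surj by metis
    have "exp (c + b) = exp c * exp b" by (rule exp_add_commuting) (simp add: mult.commute)
    also have "\<dots> = y" using inv by (simp add: c mult.assoc mult.commute[of "exp (-b)"])
    finally show "y \<in> range exp" by (metis rangeI)
  qed
qed

lemma principal_component_exp:
  "(principal_component :: 'a::{real_normed_algebra_1,comm_ring_1,banach} set) \<subseteq> range exp"
proof -
  let ?U = "range (exp :: 'a \<Rightarrow> 'a)"
  let ?V = "\<Union>x\<in>invertibles - ?U. (\<lambda>e. x * e) ` ?U"
  let ?C = "connected_component_set (invertibles :: 'a set) 1"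
  have oU: "open ?U" by (rule open_range_exp)
  have oV: "open ?V"
  proof (rule open_UN, safe)
    fix x :: 'a assume "x \<in> invertibles"
    then obtain x' where xx: "x * x' = 1" by (auto simp: invertibles_def)
    have "(\<lambda>e. x * e) ` ?U = (\<lambda>y. x' * y) -` ?U"
    proof (intro set_eqI iffI)
      fix z assume "z \<in> (\<lambda>e. x * e) ` ?U"
      then obtain c where "z = x * exp c" by auto
      hence "x' * z = exp c" using xx by (simp add: mult.assoc[symmetric] mult.commute[of x'])
      thus "z \<in> (\<lambda>y. x' * y) -` ?U" by auto
    next
      fix y assume "y \<in> (\<lambda>y. x' * y) -` ?U"
      hence "x' * y \<in> ?U" by simp
      then obtain c where "x' * y = exp c" by auto
      hence "y = x * exp c" using xx by (metis mult.assoc mult_1_left)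
      thus "y \<in> (\<lambda>e. x * e) ` ?U" by auto
    qed
    moreover have "open ((\<lambda>y. x' * y) -` ?U)"
      by (intro open_vimage oU continuous_intros)
    ultimately show "open ((\<lambda>e. x * e) ` ?U)" by simp
  qed
  have one: "(1::'a) \<in> invertibles" by (auto simp: invertibles_def)
  have cov: "?C \<subseteq> ?U \<union> ?V"
  proof
    fix x assume "x \<in> ?C"
    hence xi: "x \<in> invertibles" using connected_component_subset by blast
    show "x \<in> ?U \<union> ?V"
    proof (cases "x \<in> ?U")
      case False
      hence "x * exp 0 \<in> (\<lambda>e. x * e) ` ?U" by blast
      thus ?thesis using False xi by auto
    qed auto
  qed
  have disj0: "?U \<inter> ?V = {}"
  proof -
    { fix y assume "y \<in> ?U" "y \<in> ?V"
      then obtain b x c where xi: "x \<in> invertibles" and xU: "x \<notin> ?U"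
        and eq: "exp b = x * exp c" by auto
      have "x = x * exp c * exp (-c)" by (simp add: mult.assoc exp_minus_inverse)
      also have "\<dots> = exp (b + - c)" unfolding eq[symmetric]
        by (rule exp_add_commuting[symmetric]) (simp add: mult.commute)
      finally have False using xU by (metis rangeI) }
    thus ?thesis by blast
  qed
  hence disj: "?U \<inter> ?V \<inter> ?C = {}" by blast
  have "?U \<inter> ?C = {} \<or> ?V \<inter> ?C = {}"
    by (rule connectedD[OF connected_connected_component oU oV disj cov])
  moreover have "1 \<in> ?U \<inter> ?C" using one by (auto intro: range_eqI[of _ _ 0])
  ultimately have "?V \<inter> ?C = {}" by blast
  with cov show ?thesis unfolding principal_component_def by blast
qed



locale cstr =
  fixes j :: "complex \<Rightarrow> 'a::{real_normed_algebra_1,comm_ring_1,banach}"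
  assumes cs: "complex_structure j"
begin

lemma j_add: "j (z + w) = j z + j w" and j_mult: "j (z * w) = j z * j w"
  and j_real: "j (complex_of_real r) = of_real r" and j_normx: "norm (j z * x) = cmod z * norm x"
  using cs unfolding complex_structure_def by auto

lemma j_zero[simp]: "j 0 = 0" using j_real[of 0] by simp
lemma j_one[simp]: "j 1 = 1" using j_real[of 1] by simp
lemma j_norm: "norm (j z) = cmod z" using j_normx[of z 1] by simp
lemma j_neg: "j (- z) = - j z" using minus_unique[of "j z" "j(-z)"] j_add[of z "-z"] by simp
lemma j_diff: "j (z - w) = j z - j w" using j_add[of z "-w"] j_neg by simp
lemma j_power: "j (z ^ n) = j z ^ n" by (induct n) (simp_all add: j_mult)
lemma j_scaleR: "j (r *\<^sub>R z) = r *\<^sub>R j z"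
  by (simp add: scaleR_conv_of_real j_mult j_real)
lemma j_of_nat: "j (of_nat n) = of_nat n" using j_real[of "real n"] by simp
lemma j_sum: "j (sum f S) = sum (\<lambda>x. j (f x)) S"
  by (induct S rule: infinite_finite_induct) (simp_all add: j_add)

lemma bl_j: "bounded_linear j"
  by (rule bounded_linear_intro[where K=1]) (simp_all add: j_add j_scaleR j_norm)

lemma j_inj: "j z = j w \<longleftrightarrow> z = w"
  using j_norm[of "z - w"] j_diff[of z w] by auto

lemma j_exp: "j (exp z) = exp (j z)"
proof -
  have "j (exp z) = (\<Sum>n. j (z ^ n /\<^sub>R fact n))"
    unfolding exp_def by (rule bounded_linear.suminf[OF bl_j summable_exp_generic])
  also have "\<dots> = exp (j z)" unfolding exp_def by (simp add: j_scaleR j_power)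
  finally show ?thesis .
qed

lemma closed_range_j: "closed (range j)"
proof (rule closed_sequential_limits[THEN iffD2], safe)
  fix s :: "nat \<Rightarrow> 'a" and l assume s: "\<forall>n. s n \<in> range j" and lim: "s \<longlonglongrightarrow> l"
  have "\<forall>n. \<exists>w. s n = j w" using s by auto
  then obtain z where z: "\<And>n. s n = j (z n)" by metis
  have sz: "s = (\<lambda>n. j (z n))" by (rule ext) (rule z)
  have "Cauchy s" using lim by (rule LIMSEQ_imp_Cauchy)
  have dz: "dist (z m) (z n) = dist (s m) (s n)" for m n
    unfolding sz dist_norm j_diff[symmetric] j_norm by (rule refl)
  have "Cauchy z" using \<open>Cauchy s\<close> unfolding Cauchy_def dz .
  then obtain w where "z \<longlonglongrightarrow> w" using Cauchy_convergent convergent_def by blast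
  hence "(\<lambda>n. j (z n)) \<longlonglongrightarrow> j w" by (rule bounded_linear.tendsto[OF bl_j])
  hence "l = j w" using lim unfolding sz by (rule LIMSEQ_unique[rotated])
  thus "l \<in> range j" by simp
qed

end



lemma geom_shift:
  fixes v :: "'a::comm_ring_1"
  assumes "v ^ N = 1"
  shows "v * (\<Sum>k<N. v ^ k) = (\<Sum>k<N. v ^ k)"
proof -
  have "(\<Sum>k<Suc N. v ^ k) = 1 + (\<Sum>k<N. v ^ Suc k)" by (subst sum.lessThan_Suc_shift) simp
  moreover have "(\<Sum>k<Suc N. v ^ k) = (\<Sum>k<N. v ^ k) + 1" using assms by simp
  ultimately have "(\<Sum>k<N. v ^ Suc k) = (\<Sum>k<N. v ^ k)" by (simp add: add.commute)
  thus ?thesis by (simp add: sum_distrib_left)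
qed

lemma geom_pow_shift:
  fixes v :: "'a::comm_ring_1"
  assumes "v ^ N = 1"
  shows "v ^ i * (\<Sum>k<N. v ^ k) = (\<Sum>k<N. v ^ k)"
  by (induct i) (simp_all add: mult.assoc geom_shift[OF assms])

context cstr begin

lemma root_unity_scalar:
  assumes idem: "\<forall>p::'a. p * p = p \<longrightarrow> p = 0 \<or> p = 1" and N: "N > 0" and u: "u ^ N = 1"
  shows "\<exists>\<zeta>. u = j \<zeta>"
proof -
  define \<omega> :: complex where "\<omega> = exp (2 * of_real pi * \<i> / of_nat N)"
  have \<omega>pow: "\<omega> ^ k = exp (2 * of_real pi * \<i> * of_nat k / of_nat N)" for k
    unfolding \<omega>_def exp_of_nat_mult[symmetric] by (simp add: field_simps)
  have \<omega>1: "\<omega> ^ k = 1 \<longleftrightarrow> N dvd k" for k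
    unfolding \<omega>pow using N by (intro complex_root_unity_eq_1) simp
  have \<omega>0: "\<omega> \<noteq> 0" by (simp add: \<omega>_def)
  define v where "v m = j (\<omega> ^ m) * u" for m
  have vN: "v m ^ N = 1" for m
  proof -
    have "v m ^ N = j ((\<omega> ^ N) ^ m) * u ^ N"
      by (simp add: v_def power_mult_distrib j_power[symmetric] power_mult[symmetric] mult.commute)
    thus ?thesis using \<omega>1[of N] u by simp
  qed
  define S where "S m = (\<Sum>k<N. v m ^ k)" for m
  define p where "p m = of_real (1 / real N) * S m" for m
  have vS: "v m ^ i * S m = S m" for m i unfolding S_def by (rule geom_pow_shift[OF vN])
  have SS: "S m * S m = of_nat N * S m" for m
  proof -
    have "S m * S m = (\<Sum>k<N. v m ^ k * S m)" by (simp add: S_def[of m] sum_distrib_right)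
    also have "\<dots> = of_nat N * S m" by (simp add: vS)
    finally show ?thesis .
  qed
  have cN: "of_real (1 / real N) * (of_nat N :: 'a) = 1"
  proof -
    have "of_real (1 / real N) * (of_nat N :: 'a) = of_real (1 / real N * real N)"
      by (simp only: of_real_mult of_real_of_nat_eq)
    also have "\<dots> = 1" using N by simp
    finally show ?thesis .
  qed
  have pp: "p m * p m = p m" for m
  proof -
    have "p m * p m = of_real (1 / real N) * (of_real (1 / real N) * (S m * S m))"
      by (simp add: p_def algebra_simps)
    also have "\<dots> = of_real (1 / real N) * (of_real (1 / real N) * (of_nat N * S m))"
      by (simp only: SS)
    also have "\<dots> = of_real (1 / real N) * ((of_real (1 / real N) * of_nat N) * S m)"
      by (simp only: mult.assoc)
    also have "\<dots> = p m" by (simp add: cN p_def)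
    finally show ?thesis .
  qed
  have vp: "v m * p m = p m" for m using vS[of m 1] unfolding p_def by (metis mult.left_commute power_one_right)
  have inner: "(\<Sum>m<N. (\<omega> ^ k) ^ m) = (if k = 0 then of_nat N else 0)" if "k < N" for k
  proof (cases "k = 0")
    case False
    hence "\<omega> ^ k \<noteq> 1" using \<omega>1[of k] that by (auto dest: dvd_imp_le)
    moreover have "(\<omega> ^ k) ^ N = 1" using \<omega>1[of "k * N"] by (simp add: power_mult[symmetric])
    ultimately show ?thesis using False by (simp add: sum_gp_strict)
  qed simp
  have "(\<Sum>m<N. S m) = (\<Sum>k<N. (\<Sum>m<N. v m ^ k))" unfolding S_def by (rule sum.swap)
  also have "\<dots> = (\<Sum>k<N. j (\<Sum>m<N. (\<omega> ^ k) ^ m) * u ^ k)"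
    by (intro sum.cong refl)
       (simp add: v_def power_mult_distrib j_sum sum_distrib_right j_power[symmetric]
         power_mult[symmetric] mult.commute sum_distrib_left)
  also have "\<dots> = (\<Sum>k<N. (if k = 0 then of_nat N else 0))"
    by (intro sum.cong refl) (simp add: inner j_of_nat)
  also have "\<dots> = of_nat N" using N by (simp add: sum.delta')
  finally have sumS: "(\<Sum>m<N. S m) = of_nat N" .
  have "(\<Sum>m<N. p m) = of_real (1 / real N) * of_nat N"
    by (simp add: p_def sum_distrib_left[symmetric] sumS)
  also have "\<dots> = 1" by (rule cN)
  finally have sump: "(\<Sum>m<N. p m) = 1" .
  obtain m where pm: "p m \<noteq> 0"
  proof (rule ccontr)
    assume "\<not> thesis"
    hence "\<forall>m. p m = 0" using that by blast
    hence "(\<Sum>m<N. p m) = 0" by simp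
    thus False using sump by simp
  qed
  hence "p m = 1" using idem pp by blast
  hence "v m = 1" using vp[of m] by simp
  hence "j (inverse (\<omega> ^ m)) * (j (\<omega> ^ m) * u) = j (inverse (\<omega> ^ m))" by (simp add: v_def)
  hence "u = j (inverse (\<omega> ^ m))"
    by (simp add: mult.assoc[symmetric] j_mult[symmetric] \<omega>0)
  thus ?thesis by blast
qed

end


lemma exp_add_c: "exp (x + y) = exp x * exp (y :: 'a::{real_normed_algebra_1,comm_ring_1,banach})"
  by (rule exp_add_commuting) (simp add: mult.commute)

lemma exp_nat_mult_c: "exp (of_nat n * x) = exp (x :: 'a::{real_normed_algebra_1,comm_ring_1,banach}) ^ n"
proof (induct n)
  case (Suc n)
  have "exp (of_nat (Suc n) * x) = exp (x + of_nat n * x)" by (simp add: algebra_simps)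
  also have "\<dots> = exp x * exp x ^ n" using Suc by (simp add: exp_add_c)
  finally show ?case by simp
qed simp

lemma exp_sum_c: "exp (sum f I) = prod (\<lambda>i. exp (f i :: 'a::{real_normed_algebra_1,comm_ring_1,banach})) I"
  by (induct I rule: infinite_finite_induct) (simp_all add: exp_add_c)

context cstr begin

lemma exp_one_scalar:
  assumes idem: "\<forall>p::'a. p * p = p \<longrightarrow> p = 0 \<or> p = 1" and d: "exp d = 1"
  shows "d \<in> range j"
proof -
  define q where "q K = real K *\<^sub>R (exp ((1 / real K) *\<^sub>R d) - 1)" for K :: nat
  have qj: "q K \<in> range j" for K
  proof (cases "K = 0")
    case True thus ?thesis by (auto simp: q_def intro: range_eqI[of _ _ 0])
  next
    case False
    have c1: "(of_nat K :: 'a) * of_real (1 / real K) = of_real (real K * (1 / real K))"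
      by (simp only: of_real_mult of_real_of_nat_eq)
    have "of_nat K * ((1 / real K) *\<^sub>R d) = d"
      using False c1 by (simp add: scaleR_conv_of_real mult.assoc[symmetric])
    hence "exp ((1 / real K) *\<^sub>R d) ^ K = 1" using d exp_nat_mult_c[of K "(1 / real K) *\<^sub>R d"] by simp
    then obtain \<zeta> where z: "exp ((1 / real K) *\<^sub>R d) = j \<zeta>"
      using root_unity_scalar[OF idem, of K] False by auto
    have "q K = j (real K *\<^sub>R (\<zeta> - 1))" by (simp add: q_def z j_scaleR j_diff)
    thus ?thesis by simp
  qed
  have bnd: "norm (q K - d) \<le> norm d ^ 2 / real K" if K: "real K \<ge> norm d" "K > 0" for K
  proof -
    let ?x = "(1 / real K) *\<^sub>R d"
    have nx: "norm ?x = norm d / real K" by simp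
    have nx1: "norm ?x \<le> 1" using K by (simp add: field_simps)
    have "q K - d = real K *\<^sub>R (exp ?x - 1 - ?x)"
      using K by (simp add: q_def scaleR_diff_right)
    hence "norm (q K - d) = real K * norm (exp ?x - 1 - ?x)" by simp
    also have "\<dots> \<le> real K * norm ?x ^ 2"
      by (intro mult_left_mono exp_rem_bound nx1) simp
    also have "\<dots> = norm d ^ 2 / real K" using K by (simp add: nx power2_eq_square field_simps)
    finally show ?thesis .
  qed
  have lim0: "(\<lambda>K. norm d ^ 2 / real K) \<longlonglongrightarrow> 0" by (rule lim_const_over_n)
  have ev: "eventually (\<lambda>K. norm (q K - d) \<le> norm d ^ 2 / real K) sequentially"
  proof -
    obtain M :: nat where M: "norm d \<le> real M" using real_arch_simple by blast
    show ?thesis unfolding eventually_sequentially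
      by (intro exI[of _ "Suc M"] allI impI bnd) (use M in auto)
  qed
  have "(\<lambda>K. q K - d) \<longlonglongrightarrow> 0" by (rule Lim_null_comparison[OF ev lim0])
  hence "q \<longlonglongrightarrow> d" by (simp add: LIM_zero_iff)
  thus ?thesis using closed_range_j qj closed_sequentially by blast
qed

end


fun nm :: "nat \<Rightarrow> 'g::ab_group_add \<Rightarrow> 'g" where
  "nm 0 x = 0" | "nm (Suc k) x = x + nm k x"

lemma nm_add: "nm (a + b) x = nm a x + nm b x"
  by (induct a) (simp_all add: add.assoc)

lemma nm_mult: "nm (a * b) x = nm a (nm b x)"
  by (induct a) (simp_all add: nm_add)

lemma nm_zero[simp]: "nm k 0 = 0" by (induct k) simp_all

lemma nm_one[simp]: "nm 1 x = x" by simp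

lemma finite_order:
  fixes x :: "'g::{finite,ab_group_add}"
  shows "\<exists>n>0. nm n x = 0"
proof -
  have "\<not> inj (\<lambda>k::nat. nm k x)"
  proof
    assume "inj (\<lambda>k::nat. nm k x)"
    hence "finite (UNIV :: nat set)" using finite_imageD[of "\<lambda>k. nm k x" UNIV] by simp
    thus False by simp
  qed
  then obtain a b where ab: "a \<noteq> b" "nm a x = nm b x" unfolding inj_def by blast
  { fix a b :: nat assume "a < b" "nm a x = nm b x"
    hence "nm (b - a) x = 0" using nm_add[of a "b - a" x] by simp
    hence "\<exists>n>0. nm n x = 0" using \<open>a < b\<close> by (intro exI[of _ "b - a"]) simp }
  with ab show ?thesis by (metis linorder_neqE_nat)
qed

definition sg :: "'g::ab_group_add set \<Rightarrow> bool" where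
  "sg H \<longleftrightarrow> 0 \<in> H \<and> (\<forall>x\<in>H. \<forall>y\<in>H. x + y \<in> H) \<and> (\<forall>x\<in>H. - x \<in> H)"

definition ghom :: "'g::ab_group_add set \<Rightarrow> ('g \<Rightarrow> complex) \<Rightarrow> bool" where
  "ghom H \<phi> \<longleftrightarrow> (\<forall>x\<in>H. \<forall>y\<in>H. \<phi> (x + y) = \<phi> x * \<phi> y) \<and> (\<forall>x\<in>H. \<phi> x \<noteq> 0)"

lemma sg_nm: "sg H \<Longrightarrow> y \<in> H \<Longrightarrow> nm k y \<in> H"
  by (induct k) (auto simp: sg_def)

lemma ghom_zero: "sg H \<Longrightarrow> ghom H \<phi> \<Longrightarrow> \<phi> 0 = 1"
  unfolding sg_def ghom_def by (metis add_0 mult_cancel_right1)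

lemma ghom_nm: "sg H \<Longrightarrow> ghom H \<phi> \<Longrightarrow> y \<in> H \<Longrightarrow> \<phi> (nm k y) = \<phi> y ^ k"
  by (induct k) (auto simp: ghom_zero ghom_def sg_nm)

lemma ghom_diff: "sg H \<Longrightarrow> ghom H \<phi> \<Longrightarrow> a \<in> H \<Longrightarrow> b \<in> H \<Longrightarrow> \<phi> b = \<phi> a * \<phi> (b - a)"
proof -
  assume H: "sg H" "ghom H \<phi>" "a \<in> H" "b \<in> H"
  hence "b - a \<in> H" unfolding sg_def by (metis diff_conv_add_uminus)
  with H have "\<phi> (a + (b - a)) = \<phi> a * \<phi> (b - a)" unfolding ghom_def by blast
  thus ?thesis by simp
qed

lemma ext_step:
  fixes x :: "'g::{finite,ab_group_add}"
  assumes H: "sg H" and \<phi>: "ghom H \<phi>" and x: "x \<notin> H"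
    and d: "d = (LEAST d. d > 0 \<and> nm d x \<in> H)" and q: "q ^ d = \<phi> (nm d x)"
  shows "\<exists>H' \<phi>'. sg H' \<and> ghom H' \<phi>' \<and> H \<subseteq> H' \<and> x \<in> H' \<and> (\<forall>h\<in>H. \<phi>' h = \<phi> h) \<and> \<phi>' x = q"
proof -
  obtain n where n: "n > 0" "nm n x = 0" using finite_order by blast
  have ex: "\<exists>d. d > 0 \<and> nm d x \<in> H" using n H by (auto simp: sg_def)
  have d1: "d > 0 \<and> nm d x \<in> H" unfolding d by (rule LeastI_ex[OF ex])
  have dmin: "\<And>r. 0 < r \<Longrightarrow> nm r x \<in> H \<Longrightarrow> d \<le> r" unfolding d by (auto intro: Least_le)
  have dH: "nm d x \<in> H" using d1 by simp
  have q0: "q \<noteq> 0"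
  proof
    assume "q = 0" hence "\<phi> (nm d x) = 0" using q d1 by (metis power_0_left less_not_refl)
    with dH \<phi> show False by (auto simp: ghom_def)
  qed
  have key: "d dvd m \<and> \<phi> (nm m x) = q ^ m" if m: "nm m x \<in> H" for m
  proof -
    define t r where "t = m div d" and "r = m mod d"
    have mtr: "m = r + d * t" by (simp add: t_def r_def)
    have nmm: "nm m x = nm r x + nm t (nm d x)"
      unfolding mtr nm_add using nm_mult[of t d x] by (simp add: mult.commute)
    have tH: "nm t (nm d x) \<in> H" by (rule sg_nm[OF H dH])
    have "nm r x = nm m x + - nm t (nm d x)" using nmm by simp
    hence rH: "nm r x \<in> H" using m tH H unfolding sg_def by metis
    have "r < d" using d1 by (simp add: r_def)
    hence r0: "r = 0" using dmin[OF _ rH] by (cases "r = 0") auto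
    have "\<phi> (nm m x) = \<phi> (nm t (nm d x))" using nmm r0 by simp
    also have "\<dots> = \<phi> (nm d x) ^ t" by (rule ghom_nm[OF H \<phi> dH])
    also have "\<dots> = q ^ m" using mtr r0 by (simp add: q[symmetric] power_mult)
    finally show ?thesis using mtr r0 by simp
  qed
  have wd: "\<phi> h * q ^ k = \<phi> h' * q ^ k'"
    if hh: "h \<in> H" "h' \<in> H" and eq: "h + nm k x = h' + nm k' x" for h h' k k'
  proof -
    { fix h h' k k' assume hh: "h \<in> H" "h' \<in> H" and eq: "h + nm k x = h' + nm k' x" and kk: "k' \<le> k"
      have "nm (k - k') x = h' - h" using eq nm_add[of k' "k - k'" x] kk
        by (simp add: algebra_simps)
      hence "nm (k - k') x \<in> H" using hh H unfolding sg_def by (metis diff_conv_add_uminus)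
      hence "\<phi> (nm (k - k') x) = q ^ (k - k')" using key by blast
      moreover have "\<phi> h' = \<phi> h * \<phi> (h' - h)" by (rule ghom_diff[OF H \<phi> hh])
      ultimately have "\<phi> h' = \<phi> h * q ^ (k - k')" using \<open>nm (k - k') x = h' - h\<close> by simp
      hence "\<phi> h' * q ^ k' = \<phi> h * q ^ k" using kk
        by (simp add: mult.assoc power_add[symmetric])
      hence "\<phi> h * q ^ k = \<phi> h' * q ^ k'" by simp }
    note aux = this
    show ?thesis
    proof (cases "k' \<le> k")
      case True thus ?thesis using aux[OF hh eq] by simp
    next
      case False thus ?thesis using aux[OF hh(2,1) eq[symmetric]] by simp
    qed
  qed
  define H' where "H' = {h + nm k x | h k. h \<in> H}"
  define \<phi>' where "\<phi>' y = (SOME v. \<exists>h k. h \<in> H \<and> y = h + nm k x \<and> v = \<phi> h * q ^ k)" for y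
  have \<phi>'_eq: "\<phi>' (h + nm k x) = \<phi> h * q ^ k" if "h \<in> H" for h k
  proof -
    have ex: "\<exists>v. \<exists>h' k'. h' \<in> H \<and> h + nm k x = h' + nm k' x \<and> v = \<phi> h' * q ^ k'"
      using that by blast
    have "\<exists>h' k'. h' \<in> H \<and> h + nm k x = h' + nm k' x \<and> \<phi>' (h + nm k x) = \<phi> h' * q ^ k'"
      unfolding \<phi>'_def by (rule someI_ex[OF ex])
    then obtain h' k' where "h' \<in> H" "h + nm k x = h' + nm k' x" "\<phi>' (h + nm k x) = \<phi> h' * q ^ k'"
      by blast
    thus ?thesis using wd[OF that] by simp
  qed
  have sgH': "sg H'"
    unfolding sg_def
  proof (intro conjI ballI)
    show "0 \<in> H'" unfolding H'_def using H by (auto simp: sg_def intro!: exI[of _ 0])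
  next
    fix y z assume "y \<in> H'" "z \<in> H'"
    then obtain h k h' k' where y: "y = h + nm k x" "h \<in> H" and z: "z = h' + nm k' x" "h' \<in> H"
      unfolding H'_def by blast
    have "y + z = (h + h') + nm (k + k') x" using y z by (simp add: nm_add algebra_simps)
    moreover have "h + h' \<in> H" using y z H by (auto simp: sg_def)
    ultimately show "y + z \<in> H'" unfolding H'_def by blast
  next
    fix y assume "y \<in> H'"
    then obtain h k where y: "y = h + nm k x" "h \<in> H" unfolding H'_def by blast
    have "nm ((n - 1) * k) x + nm k x = nm (n * k) x"
      using n by (simp add: nm_add[symmetric] algebra_simps)
    also have "\<dots> = 0" using n by (simp add: mult.commute nm_mult)
    finally have "- nm k x = nm ((n - 1) * k) x" by (metis add.commute minus_unique)
    hence "- y = (- h) + nm ((n - 1) * k) x" using y by simp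
    moreover have "- h \<in> H" using y H by (auto simp: sg_def)
    ultimately show "- y \<in> H'" unfolding H'_def by blast
  qed
  have homH': "ghom H' \<phi>'"
    unfolding ghom_def
  proof (intro conjI ballI)
    fix y z assume "y \<in> H'" "z \<in> H'"
    then obtain h k h' k' where y: "y = h + nm k x" "h \<in> H" and z: "z = h' + nm k' x" "h' \<in> H"
      unfolding H'_def by blast
    have "y + z = (h + h') + nm (k + k') x" using y z by (simp add: nm_add algebra_simps)
    moreover have "h + h' \<in> H" using y z H by (auto simp: sg_def)
    ultimately have "\<phi>' (y + z) = \<phi> (h + h') * q ^ (k + k')" by (simp add: \<phi>'_eq)
    also have "\<dots> = (\<phi> h * q ^ k) * (\<phi> h' * q ^ k')"
      using y z \<phi> by (simp add: ghom_def power_add)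
    finally show "\<phi>' (y + z) = \<phi>' y * \<phi>' z" using y z by (simp add: \<phi>'_eq)
  next
    fix y assume "y \<in> H'"
    then obtain h k where y: "y = h + nm k x" "h \<in> H" unfolding H'_def by blast
    thus "\<phi>' y \<noteq> 0" using \<phi> q0 by (simp add: \<phi>'_eq ghom_def)
  qed
  have sub: "H \<subseteq> H'" unfolding H'_def by (force intro: exI[of _ 0])
  have xin: "x \<in> H'" unfolding H'_def using H by (auto simp: sg_def intro!: exI[of _ 0] exI[of _ 1])
  have ext: "\<forall>h\<in>H. \<phi>' h = \<phi> h" using \<phi>'_eq[of _ 0] by simp
  have "\<phi>' x = q" using \<phi>'_eq[of 0 1] H ghom_zero[OF H \<phi>] by (simp add: sg_def)
  thus ?thesis using sgH' homH' sub xin ext by blast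
qed

lemma complex_root_ex: "w \<noteq> 0 \<Longrightarrow> d > 0 \<Longrightarrow> \<exists>q::complex. q ^ d = w"
  by (intro exI[of _ "exp (Ln w / of_nat d)"]) (simp add: exp_of_nat_mult[symmetric])

lemma ext_all:
  fixes H :: "'g::{finite,ab_group_add} set"
  shows "sg H \<Longrightarrow> ghom H \<phi> \<Longrightarrow> \<exists>chi. ghom UNIV chi \<and> (\<forall>h\<in>H. chi h = \<phi> h)"
proof (induct "card (UNIV - H)" arbitrary: H \<phi> rule: less_induct)
  case less
  show ?case
  proof (cases "H = UNIV")
    case True thus ?thesis using less by blast
  next
    case False
    then obtain x where x: "x \<notin> H" by blast
    define d where "d = (LEAST d. d > 0 \<and> nm d x \<in> H)"
    obtain n where n: "n > 0" "nm n x = 0" using finite_order by blast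
    have ex: "\<exists>d. d > 0 \<and> nm d x \<in> H" using n less by (auto simp: sg_def)
    have d1: "d > 0 \<and> nm d x \<in> H" unfolding d_def by (rule LeastI_ex[OF ex])
    obtain q where q: "q ^ d = \<phi> (nm d x)"
      using complex_root_ex[of "\<phi> (nm d x)" d] d1 less by (auto simp: ghom_def)
    obtain H' \<phi>' where H': "sg H'" "ghom H' \<phi>'" "H \<subseteq> H'" "x \<in> H'" "\<forall>h\<in>H. \<phi>' h = \<phi> h"
      using ext_step[OF less(2,3) x d_def q] by blast
    have "card (UNIV - H') < card (UNIV - H)"
      using H' x by (intro psubset_card_mono) auto
    then obtain chi where c: "ghom UNIV chi" "\<forall>h\<in>H'. chi h = \<phi>' h" using less H' by blast
    show ?thesis
    proof (intro exI[of _ chi] conjI ballI)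
      fix h assume "h \<in> H" thus "chi h = \<phi> h" using c H' by auto
    qed (rule c(1))
  qed
qed

lemma char_sep:
  fixes g :: "'g::{finite,ab_group_add}"
  assumes g: "g \<noteq> 0"
  shows "\<exists>chi. ghom UNIV chi \<and> chi g \<noteq> 1"
proof -
  have H0: "sg {0::'g}" by (simp add: sg_def)
  have p0: "ghom {0::'g} (\<lambda>_. 1)" by (simp add: ghom_def)
  define d where "d = (LEAST d. d > 0 \<and> nm d g \<in> {0})"
  obtain n where n: "n > 0" "nm n g = 0" using finite_order by blast
  have d1: "d > 0 \<and> nm d g \<in> {0}" unfolding d_def by (rule LeastI_ex) (use n in blast)
  have dn1: "d \<noteq> 1" using d1 g by auto
  define q where "q = exp (2 * of_real pi * \<i> * of_nat 1 / of_nat d)"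
  have qd: "q ^ d = 1"
    unfolding q_def exp_of_nat_mult[symmetric] using d1
    by (simp add: complex_root_unity_eq_1[of d d, simplified] field_simps)
  have q1: "q \<noteq> 1" unfolding q_def using d1 dn1 by (subst complex_root_unity_eq_1) auto
  obtain H' \<phi>' where H': "sg H'" "ghom H' \<phi>'" "g \<in> H'" "\<phi>' g = q"
    using ext_step[OF H0 p0 _ d_def, of q] qd g by auto
  obtain chi where "ghom UNIV chi" "\<forall>h\<in>H'. chi h = \<phi>' h" using ext_all[OF H'(1,2)] by blast
  thus ?thesis using H' q1 by auto
qed



lemma sum_shift_group:
  fixes f :: "'g::{finite,ab_group_add} \<Rightarrow> 'b::comm_monoid_add"
  shows "(\<Sum>l\<in>UNIV. f (l - k)) = (\<Sum>l\<in>UNIV. f l)"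
  by (rule sum.reindex_bij_witness[of _ "\<lambda>l. l + k" "\<lambda>l. l - k"]) auto

locale gstr = cstr j for j :: "complex \<Rightarrow> 'a::{real_normed_algebra_1,comm_ring_1,banach}" +
  fixes Ag :: "'g::{finite,ab_group_add} \<Rightarrow> 'a set"
  assumes gs: "graded_structure j Ag"
begin

lemma Ag_closed: "closed (Ag h)" and Ag_0: "0 \<in> Ag h"
  and Ag_add: "x \<in> Ag h \<Longrightarrow> y \<in> Ag h \<Longrightarrow> x + y \<in> Ag h"
  and Ag_smul: "x \<in> Ag h \<Longrightarrow> j z * x \<in> Ag h"
  and Ag_mult: "x \<in> Ag g \<Longrightarrow> y \<in> Ag h \<Longrightarrow> x * y \<in> Ag (g + h)"
  and decomp: "\<exists>!f. (\<forall>g. f g \<in> Ag g) \<and> x = (\<Sum>g\<in>UNIV. f g)"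
proof -
  note G = gs[unfolded graded_structure_def]
  show "closed (Ag h)" using G by blast
  show "0 \<in> Ag h" using G by blast
  show "x \<in> Ag h \<Longrightarrow> y \<in> Ag h \<Longrightarrow> x + y \<in> Ag h" using G by blast
  show "x \<in> Ag h \<Longrightarrow> j z * x \<in> Ag h" using G by blast
  show "x \<in> Ag g \<Longrightarrow> y \<in> Ag h \<Longrightarrow> x * y \<in> Ag (g + h)" using G by blast
  show "\<exists>!f. (\<forall>g. f g \<in> Ag g) \<and> x = (\<Sum>g\<in>UNIV. f g)" using G by (elim conjE allE)
qed

lemma Ag_neg: "x \<in> Ag h \<Longrightarrow> - x \<in> Ag h"
  using Ag_smul[of x h "-1"] by (simp add: j_neg)

lemma Ag_diff: assumes "x \<in> Ag h" "y \<in> Ag h" shows "x - y \<in> Ag h"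
proof -
  have "- y \<in> Ag h" by (rule Ag_neg[OF assms(2)])
  hence "x + - y \<in> Ag h" by (rule Ag_add[OF assms(1)])
  thus ?thesis by (simp only: diff_conv_add_uminus)
qed

lemma Ag_scaleR: "x \<in> Ag h \<Longrightarrow> r *\<^sub>R x \<in> Ag h"
  using Ag_smul[of x h "complex_of_real r"] by (simp add: j_real scaleR_conv_of_real)

lemma Ag_sum: "(\<And>i. i \<in> I \<Longrightarrow> f i \<in> Ag h) \<Longrightarrow> sum f I \<in> Ag h"
  by (induct I rule: infinite_finite_induct) (auto simp: Ag_0 Ag_add)

definition P :: "'a \<Rightarrow> 'g \<Rightarrow> 'a" where
  "P x = (THE f. (\<forall>g. f g \<in> Ag g) \<and> x = (\<Sum>g\<in>UNIV. f g))"

lemma P_spec: "(\<forall>g. P x g \<in> Ag g) \<and> x = (\<Sum>g\<in>UNIV. P x g)"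
  unfolding P_def by (rule theI'[OF decomp])

lemma P_in: "P x g \<in> Ag g" using P_spec by blast
lemma P_sum: "(\<Sum>g\<in>UNIV. P x g) = x" using P_spec by metis

lemma P_uniq: "(\<And>g. f g \<in> Ag g) \<Longrightarrow> x = (\<Sum>g\<in>UNIV. f g) \<Longrightarrow> P x = f"
  using decomp[of x] P_spec[of x] by blast

lemma P_homog: "x \<in> Ag h \<Longrightarrow> P x = (\<lambda>k. if k = h then x else 0)"
  by (rule P_uniq) (auto simp: Ag_0)

lemma P_add: "P (x + y) = (\<lambda>h. P x h + P y h)"
  by (rule P_uniq) (simp_all add: Ag_add P_in sum.distrib P_sum)

lemma P_diff: "P (x - y) = (\<lambda>h. P x h - P y h)"
  by (rule P_uniq) (simp_all add: Ag_diff P_in sum_subtractf P_sum)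

lemma P_smul: "P (j z * x) = (\<lambda>h. j z * P x h)"
  by (rule P_uniq) (simp_all add: Ag_smul P_in sum_distrib_left[symmetric] P_sum)

lemma one_Ag0: "1 \<in> Ag 0"
proof -
  define e where "e = P 1"
  have e0y: "e 0 * y = y" if y: "y \<in> Ag h" for y h
  proof -
    define f where "f l = e (l - h) * y" for l
    have fin: "f l \<in> Ag l" for l unfolding f_def using Ag_mult[OF P_in[of 1 "l - h"] y] by (simp add: e_def)
    have "(\<Sum>l\<in>UNIV. f l) = (\<Sum>l\<in>UNIV. e l * y)" unfolding f_def by (rule sum_shift_group)
    also have "\<dots> = 1 * y" by (simp add: sum_distrib_right[symmetric] e_def P_sum)
    finally have "P y = f" using fin by (intro P_uniq) auto
    hence "f h = y" using P_homog[OF y] by metis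
    thus ?thesis by (simp add: f_def)
  qed
  have "e 0 = e 0 * 1" by simp
  also have "\<dots> = e 0 * (\<Sum>g\<in>UNIV. e g)" by (simp add: e_def P_sum)
  also have "\<dots> = (\<Sum>g\<in>UNIV. e 0 * e g)" by (simp add: sum_distrib_left)
  also have "\<dots> = (\<Sum>g\<in>UNIV. e g)" using e0y[OF P_in[of 1]] by (simp add: e_def)
  also have "\<dots> = 1" by (simp add: e_def P_sum)
  finally show ?thesis using P_in[of 1 0] by (simp add: e_def)
qed

lemma j_Ag0: "j z \<in> Ag 0" using Ag_smul[OF one_Ag0, of z] by simp

lemma P_mult: "P (x * y) = (\<lambda>l. \<Sum>k\<in>UNIV. P x k * P y (l - k))"
proof (rule P_uniq)
  fix l show "(\<Sum>k\<in>UNIV. P x k * P y (l - k)) \<in> Ag l"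
  proof (rule Ag_sum)
    fix k have "P x k * P y (l - k) \<in> Ag (k + (l - k))" by (rule Ag_mult[OF P_in P_in])
    thus "P x k * P y (l - k) \<in> Ag l" by simp
  qed
next
  have "x * y = (\<Sum>k\<in>UNIV. P x k) * (\<Sum>k'\<in>UNIV. P y k')" by (simp add: P_sum)
  also have "\<dots> = (\<Sum>k\<in>UNIV. \<Sum>l\<in>UNIV. P x k * P y l)" by (rule sum_product)
  also have "\<dots> = (\<Sum>k\<in>UNIV. \<Sum>l\<in>UNIV. P x k * P y (l - k))"
    by (rule sum.cong[OF refl], rule sum_shift_group[symmetric])
  also have "\<dots> = (\<Sum>l\<in>UNIV. \<Sum>k\<in>UNIV. P x k * P y (l - k))" by (rule sum.swap)
  finally show "x * y = (\<Sum>l\<in>UNIV. \<Sum>k\<in>UNIV. P x k * P y (l - k))" .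
qed

lemma pow_Ag: "y \<in> Ag h \<Longrightarrow> y ^ n \<in> Ag (nm n h)"
  by (induct n) (simp_all add: one_Ag0 Ag_mult)

end


locale gchar = gstr j Ag for j :: "complex \<Rightarrow> 'a::{real_normed_algebra_1,comm_ring_1,banach}"
    and Ag :: "'g::{finite,ab_group_add} \<Rightarrow> 'a set" +
  fixes chi :: "'g \<Rightarrow> complex"
  assumes ch: "ghom UNIV chi"
begin

lemma sgU: "sg (UNIV :: 'g set)" by (simp add: sg_def)
lemma chi_add: "chi (a + b) = chi a * chi b" using ch by (simp add: ghom_def)
lemma chi0: "chi 0 = 1" by (rule ghom_zero[OF sgU ch])
lemma chi_nm: "chi (nm n h) = chi h ^ n" by (rule ghom_nm[OF sgU ch]) simp
lemma chi_shift: "chi l = chi k * chi (l - k)" using chi_add[of k "l - k"] by simp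

definition sigma :: "'a \<Rightarrow> 'a" where
  "sigma x = (\<Sum>h\<in>UNIV. j (chi h) * P x h)"

lemma P_sigma: "P (sigma x) = (\<lambda>h. j (chi h) * P x h)"
  by (rule P_uniq) (simp_all add: Ag_smul P_in sigma_def)

lemma sigma_homog: "y \<in> Ag h \<Longrightarrow> sigma y = j (chi h) * y"
  by (simp add: sigma_def P_homog if_distrib cong: if_cong)

lemma sigma_one: "sigma 1 = 1" using sigma_homog[OF one_Ag0] by (simp add: chi0)

lemma sigma_mult: "sigma (x * y) = sigma x * sigma y"
proof -
  have "sigma (x * y) = (\<Sum>l\<in>UNIV. \<Sum>k\<in>UNIV. j (chi l) * (P x k * P y (l - k)))"
    by (simp add: sigma_def P_mult sum_distrib_left)
  also have "\<dots> = (\<Sum>l\<in>UNIV. \<Sum>k\<in>UNIV. (j (chi k) * P x k) * (j (chi (l - k)) * P y (l - k)))"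
    apply (intro sum.cong refl)
    subgoal for l k using chi_shift[of l k] by (simp add: j_mult algebra_simps)
    done
  also have "\<dots> = (\<Sum>k\<in>UNIV. \<Sum>l\<in>UNIV. (j (chi k) * P x k) * (j (chi (l - k)) * P y (l - k)))"
    by (rule sum.swap)
  also have "\<dots> = (\<Sum>k\<in>UNIV. (j (chi k) * P x k) * (\<Sum>l\<in>UNIV. j (chi (l - k)) * P y (l - k)))"
    by (simp add: sum_distrib_left)
  also have "\<dots> = (\<Sum>k\<in>UNIV. (j (chi k) * P x k) * sigma y)"
    unfolding sigma_def by (simp only: sum_shift_group[of "\<lambda>l. j (chi l) * P y l"])
  also have "\<dots> = sigma x * sigma y" by (simp add: sigma_def sum_distrib_right)
  finally show ?thesis .
qed

lemma sigma_prod: "sigma (prod f I) = prod (\<lambda>i. sigma (f i)) I"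
  by (induct I rule: infinite_finite_induct) (simp_all add: sigma_one sigma_mult)

lemma P0_sigma_diff: "P (sigma b - b) 0 = 0"
  by (simp add: P_diff P_sigma chi0)

lemma sigma_exp_homog:
  assumes y: "y \<in> Ag h"
  shows "sigma (exp y) = exp (j (chi h) * y)"
proof -
  define f where "f r n = (if nm n h = r then y ^ n /\<^sub>R fact n else 0)" for r n
  have sf: "summable (f r)" for r
  proof (rule summable_norm_cancel, rule summable_comparison_test[OF _ summable_norm_exp[of y]])
    show "\<exists>N. \<forall>n\<ge>N. norm (norm (f r n)) \<le> norm (y ^ n /\<^sub>R fact n)"
      by (auto simp: f_def)
  qed
  have fin: "f r n \<in> Ag r" for r n
    using pow_Ag[OF y, of n] by (auto simp: f_def Ag_0 Ag_scaleR)
  have Tin: "suminf (f r) \<in> Ag r" for r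
    by (rule closed_sequentially[OF Ag_closed _ summable_LIMSEQ[OF sf]]) (auto intro!: Ag_sum fin)
  have sumT: "(\<Sum>r\<in>UNIV. suminf (f r)) = exp y"
  proof -
    have "(\<Sum>r\<in>UNIV. suminf (f r)) = (\<Sum>n. \<Sum>r\<in>UNIV. f r n)" by (rule suminf_sum[symmetric]) (rule sf)
    also have "\<dots> = (\<Sum>n. y ^ n /\<^sub>R fact n)" by (simp add: f_def)
    finally show ?thesis by (simp add: exp_def)
  qed
  have PE: "P (exp y) = (\<lambda>r. suminf (f r))" by (rule P_uniq[OF Tin sumT[symmetric]])
  have "sigma (exp y) = (\<Sum>r\<in>UNIV. j (chi r) * suminf (f r))" by (simp add: sigma_def PE)
  also have "\<dots> = (\<Sum>r\<in>UNIV. \<Sum>n. j (chi r) * f r n)" by (simp add: suminf_mult[OF sf])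
  also have "\<dots> = (\<Sum>n. \<Sum>r\<in>UNIV. j (chi r) * f r n)"
    by (rule suminf_sum[symmetric]) (rule summable_mult[OF sf])
  also have "\<dots> = (\<Sum>n. (j (chi h) * y) ^ n /\<^sub>R fact n)"
  proof (rule suminf_cong)
    fix n
    have "(\<Sum>r\<in>UNIV. j (chi r) * f r n) = j (chi (nm n h)) * (y ^ n /\<^sub>R fact n)"
      by (simp add: f_def if_distrib cong: if_cong)
    also have "\<dots> = (j (chi h) * y) ^ n /\<^sub>R fact n"
      by (simp add: chi_nm j_power power_mult_distrib)
    finally show "(\<Sum>r\<in>UNIV. j (chi r) * f r n) = (j (chi h) * y) ^ n /\<^sub>R fact n" .
  qed
  also have "\<dots> = exp (j (chi h) * y)" by (simp add: exp_def)
  finally show ?thesis .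
qed

lemma sigma_exp: "sigma (exp x) = exp (sigma x)"
proof -
  have "sigma (exp x) = sigma (exp (\<Sum>h\<in>UNIV. P x h))" by (simp add: P_sum)
  also have "\<dots> = (\<Prod>h\<in>UNIV. sigma (exp (P x h)))" by (simp add: exp_sum_c sigma_prod)
  also have "\<dots> = (\<Prod>h\<in>UNIV. exp (j (chi h) * P x h))" by (intro prod.cong refl sigma_exp_homog P_in)
  also have "\<dots> = exp (sigma x)" by (simp add: sigma_def exp_sum_c)
  finally show ?thesis .
qed

end


context gchar begin

lemma no_power_pc:
  assumes idem: "\<forall>p::'a. p * p = p \<longrightarrow> p = 0 \<or> p = 1"
    and a: "a \<in> Ag g" and chig: "chi g \<noteq> 1" and m: "m > 0"
  shows "a ^ m \<notin> principal_component"
proof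
  assume "a ^ m \<in> principal_component"
  then obtain b where b: "a ^ m = exp b" using principal_component_exp by blast
  define e where "e = exp (- ((1 / real m) *\<^sub>R b))"
  have "of_nat m * (- ((1 / real m) *\<^sub>R b)) = - b"
  proof -
    have c1: "(of_nat m :: 'a) * of_real (1 / real m) = of_real (real m * (1 / real m))"
      by (simp only: of_real_mult of_real_of_nat_eq)
    thus ?thesis using m by (simp add: scaleR_conv_of_real mult.assoc[symmetric])
  qed
  hence "e ^ m = exp (- b)" unfolding e_def by (metis exp_nat_mult_c)
  hence "(a * e) ^ m = 1" by (simp add: power_mult_distrib b exp_minus_inverse)
  then obtain \<zeta> where z: "a * e = j \<zeta>" using root_unity_scalar[OF idem m] by blast
  have "\<zeta> \<noteq> 0"
  proof
    assume "\<zeta> = 0" hence "(a * e) ^ m = 0" using z m by (simp add: power_0_left)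
    with \<open>(a * e) ^ m = 1\<close> show False by simp
  qed
  define b' where "b' = j (Ln \<zeta>) + (1 / real m) *\<^sub>R b"
  have ae: "a = exp b'"
  proof -
    have "a = a * e * exp ((1 / real m) *\<^sub>R b)"
      unfolding e_def by (simp add: mult.assoc mult.commute[of "exp (- _)"] exp_minus_inverse)
    also have "\<dots> = exp (j (Ln \<zeta>)) * exp ((1 / real m) *\<^sub>R b)"
      using \<open>\<zeta> \<noteq> 0\<close> by (simp add: z j_exp[symmetric])
    also have "\<dots> = exp b'" by (simp add: b'_def exp_add_c)
    finally show ?thesis .
  qed
  define \<omega> where "\<omega> = chi g"
  have \<omega>0: "\<omega> \<noteq> 0" using ch by (simp add: ghom_def \<omega>_def)
  have "sigma (exp b') = j \<omega> * exp b'"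
    using sigma_homog[OF a] unfolding ae \<omega>_def .
  hence "exp (sigma b') = j \<omega> * exp b'" by (simp only: sigma_exp)
  define c where "c = sigma b' - b' - j (Ln \<omega>)"
  have "exp c = exp (sigma b') * exp (- b') * exp (- j (Ln \<omega>))"
    unfolding c_def diff_conv_add_uminus exp_add_c ..
  also have "\<dots> = j \<omega> * j (exp (- Ln \<omega>))"
    by (simp add: \<open>exp (sigma b') = j \<omega> * exp b'\<close> j_exp j_neg mult.assoc
        mult.left_commute[of "exp b'"] exp_minus_inverse)
  also have "\<dots> = 1" using \<omega>0 by (simp add: j_mult[symmetric] exp_minus)
  finally have "exp c = 1" .
  then obtain \<mu> where "c = j \<mu>" using exp_one_scalar[OF idem] by blast
  hence sd: "sigma b' - b' = j (\<mu> + Ln \<omega>)" by (simp add: c_def j_add algebra_simps)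
  have "P (sigma b' - b') 0 = j (\<mu> + Ln \<omega>)" unfolding sd by (simp add: P_homog[OF j_Ag0])
  hence "j (\<mu> + Ln \<omega>) = 0" using P0_sigma_diff by simp
  hence "sigma b' = b'" using sd by simp
  hence "exp b' = j \<omega> * exp b'" using \<open>exp (sigma b') = j \<omega> * exp b'\<close> by simp
  hence "exp b' * exp (- b') = (j \<omega> * exp b') * exp (- b')" by (rule arg_cong)
  hence "exp b' * exp (- b') = j \<omega> * (exp b' * exp (- b'))" by (simp only: mult.assoc)
  hence "j \<omega> = j 1" by (simp add: exp_minus_inverse)
  hence "\<omega> = 1" by (simp only: j_inj)
  thus False using chig by (simp add: \<omega>_def)
qed

end

theorem corollary3:
  fixes j :: "complex \<Rightarrow> 'a::{real_normed_algebra_1,comm_ring_1,banach}"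
    and Ag :: "'g::{finite,ab_group_add} \<Rightarrow> 'a set"
  assumes "complex_structure j"
    and "\<forall>p::'a. p * p = p \<longrightarrow> p = 0 \<or> p = 1"
    and "graded_structure j Ag"
    and "g \<noteq> 0" and "a \<in> Ag g" and "a \<in> invertibles"
  shows "infinite (invertibles_quotient :: 'a set set)"
proof
  obtain chi where chi: "ghom UNIV chi" "chi g \<noteq> 1" using char_sep[OF assms(4)] by blast
  interpret G: gchar j Ag chi
    by (intro gchar.intro gstr.intro cstr.intro gstr_axioms.intro gchar_axioms.intro assms chi)
  obtain a' where aa: "a * a' = 1" using assms(6) by (auto simp: invertibles_def)
  define F where "F m = (\<lambda>y. a ^ m * y) ` (principal_component :: 'a set)" for m
  have one: "(1::'a) \<in> principal_component"
    by (simp add: principal_component_def invertibles_def)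
  have powinv: "a ^ m \<in> invertibles" for m
    using aa by (auto simp: invertibles_def intro!: exI[of _ "a' ^ m"] simp: power_mult_distrib[symmetric])
  have FQ: "range F \<subseteq> invertibles_quotient"
    unfolding invertibles_quotient_def F_def using powinv by blast
  have inj: "inj F"
  proof (rule injI)
    { fix m m' :: nat assume mm: "m < m'" "F m = F m'"
      have "a ^ m' \<in> F m'" unfolding F_def using one by (auto intro: image_eqI[of _ _ 1])
      then obtain y where y: "y \<in> principal_component" "a ^ m' = a ^ m * y"
        using mm by (auto simp: F_def)
      have "a' ^ m * a ^ m = 1" using aa by (simp add: power_mult_distrib[symmetric] mult.commute)
      hence "y = a' ^ m * a ^ m'" using y(2) by (metis mult.assoc mult_1_left)
      also have "\<dots> = a ^ (m' - m)"
        using mm \<open>a' ^ m * a ^ m = 1\<close>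
        by (metis le_add_diff_inverse less_imp_le mult.assoc mult_1_left power_add)
      finally have "a ^ (m' - m) \<in> principal_component" using y by simp
      hence False using G.no_power_pc[OF assms(2,5) chi(2)] mm by simp }
    note aux = this
    fix m m' assume "F m = F m'"
    thus "m = m'" using aux[of m m'] aux[of m' m] by (metis linorder_neqE_nat)
  qed
  assume "finite (invertibles_quotient :: 'a set set)"
  hence "finite (range F)" using FQ finite_subset by blast
  hence "finite (UNIV :: nat set)" using finite_imageD inj by blast
  thus False by simp
qed

end
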